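(* Consider the open chain with sites $1,\dots,N$ and distance $|i-j|$. Let $R_{\max}$ be a positive integer and, for each subset $X\subseteq\{1,\dots,N\}$ with $\mathrm{diam}(X)\le R_{\max}$, let $h_X$ be an operator supported in $X$ (possibly zero, not necessarily Hermitian) such that $h_X|W\rangle=0$ and $h_X|\overline 0\rangle=0$. If for some $p\in\{0,\dots,N\}$ with $p\le N/R_{\max}$ one has $\left(\sum_{X:\mathrm{diam}(X)\le R_{\max}}h_X\right)|W^p\rangle=E'_p|W^p\rangle$ for some $E'_p\in\mathbb{C}$, then $E'_p=0$.
   Context: System of $N$ qubits on sites $1,\dots,N$ with local basis $|0\rangle,|1\rangle$; $s_i^\dagger$ acts on site $i$ as $s^\dagger|0\rangle=|1\rangle$, $s^\dagger|1\rangle=0$; $|\overline 0\rangle=|0\rangle^{\otimes N}$. For a set $X$ of sites, $\mathrm{diam}(X)=1+\max_{i,j\in X}|i-j|$. An operator is supported in $X$ if it acts as the identity on all sites outside $X$. $S^\dagger=\sum_i s_i^\dagger$; for $p=0,\dots,N$, $|W^p\rangle$ is the normalized equal-weight superposition of all basis states with exactly $p$ sites in state $|1\rangle$ (equivalently the normalization of $(S^\dagger)^p|\overline 0\rangle$), and $|W\rangle=|W^1\rangle$. *)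

theory Defs
  imports Complex_Main
begin

text \<open>Computational basis of N qubits on sites 1..N: a basis state is identified with the
set of sites in state |1>, a subset of {1..N}. States are complex functions on such sets,
operators are matrices indexed by (output basis state, input basis state).\<close>

type_synonym state = "nat set \<Rightarrow> complex"
type_synonym oper = "nat set \<Rightarrow> nat set \<Rightarrow> complex"

definition sites :: "nat \<Rightarrow> nat set" where
  "sites N = {1..N}"

definition app :: "nat \<Rightarrow> oper \<Rightarrow> state \<Rightarrow> state" where
  "app N M v = (\<lambda>b. \<Sum>a\<in>Pow (sites N). M b a * v a)"

definition state_eq :: "nat \<Rightarrow> state \<Rightarrow> state \<Rightarrow> bool" where
  "state_eq N v w \<longleftrightarrow> (\<forall>b\<in>Pow (sites N). v b = w b)"

definition zero_state :: "state" where
  "zero_state = (\<lambda>a. if a = {} then 1 else 0)"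

definition Wp :: "nat \<Rightarrow> nat \<Rightarrow> state" where
  "Wp N p = (\<lambda>a. if a \<subseteq> sites N \<and> card a = p
                  then complex_of_real (1 / sqrt (real (N choose p))) else 0)"

text \<open>M is supported in X: M = A \<otimes> Id on the complement of X.\<close>
definition supported_in :: "nat \<Rightarrow> nat set \<Rightarrow> oper \<Rightarrow> bool" where
  "supported_in N X M \<longleftrightarrow> (\<exists>A :: oper. \<forall>a\<in>Pow (sites N). \<forall>b\<in>Pow (sites N).
      M b a = (if b - X = a - X then A (b \<inter> X) (a \<inter> X) else 0))"

definition diam :: "nat set \<Rightarrow> nat" where
  "diam X = 1 + Max {nat \<bar>int i - int j\<bar> | i j. i \<in> X \<and> j \<in> X}"

definition regions :: "nat \<Rightarrow> nat \<Rightarrow> nat set set" where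
  "regions N R = {X. X \<subseteq> sites N \<and> X \<noteq> {} \<and> diam X \<le> R}"

end

theory Submission
  imports Defs
begin

lemma fin_sites: "finite (sites N)" by (simp add: sites_def)

lemma G:
  fixes N q :: nat and X b :: "nat set" and M A :: oper
  assumes X: "X \<subseteq> sites N" and b: "b \<subseteq> sites N"
  and A: "\<forall>a\<in>Pow (sites N). \<forall>b\<in>Pow (sites N). M b a = (if b - X = a - X then A (b \<inter> X) (a \<inter> X) else 0)"
  shows "(\<Sum>a\<in>Pow (sites N). M b a * Wp N q a) = complex_of_real (1/sqrt (real (N choose q))) * (\<Sum>S\<in>{S. S \<subseteq> X \<and> card S + card (b - X) = q}. A (b \<inter> X) S)"
proof -
  define c where "c = complex_of_real (1/sqrt (real (N choose q)))"
  have fin: "finite (sites N)" by (rule fin_sites)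
  have finX: "finite X" using X fin finite_subset by blast
  have finb: "finite (b - X)" using b fin finite_subset by blast
  have cardS: "card (S \<union> (b - X)) = card S + card (b - X)" if "S \<subseteq> X" for S
  proof -
    have fS: "finite S" using that finX by (rule finite_subset)
    have d: "S \<inter> (b - X) = {}" using that by blast
    show ?thesis by (rule card_Un_disjoint[OF fS finb d])
  qed
  have carda: "card a = card (a \<inter> X) + card (b - X)" if "a \<subseteq> sites N" "a - X = b - X" for a
  proof -
    have "a = (a \<inter> X) \<union> (b - X)" using that by blast
    then have "card a = card ((a \<inter> X) \<union> (b - X))" by simp
    also have "\<dots> = card (a \<inter> X) + card (b - X)" by (rule cardS) blast
    finally show ?thesis .
  qed
  have "(\<Sum>a\<in>Pow (sites N). M b a * Wp N q a) = (\<Sum>a\<in>Pow (sites N). if a - X = b - X \<and> card a = q then c * A (b\<inter>X) (a\<inter>X) else 0)"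
  proof (rule sum.cong[OF refl])
    fix a assume a: "a \<in> Pow (sites N)"
    have "M b a = (if b - X = a - X then A (b\<inter>X) (a\<inter>X) else 0)" using A a b by blast
    then show "M b a * Wp N q a = (if a - X = b - X \<and> card a = q then c * A (b\<inter>X) (a\<inter>X) else 0)"
      using a by (auto simp: Wp_def c_def)
  qed
  also have "\<dots> = (\<Sum>a\<in>{a\<in>Pow (sites N). a - X = b - X \<and> card a = q}. c * A (b\<inter>X) (a\<inter>X))"
    by (rule sum.inter_filter[symmetric]) (simp add: fin)
  also have "\<dots> = c * (\<Sum>a\<in>{a\<in>Pow (sites N). a - X = b - X \<and> card a = q}. A (b\<inter>X) (a\<inter>X))"
    by (simp add: sum_distrib_left)
  also have "(\<Sum>a\<in>{a\<in>Pow (sites N). a - X = b - X \<and> card a = q}. A (b\<inter>X) (a\<inter>X)) = (\<Sum>S\<in>{S. S \<subseteq> X \<and> card S + card (b - X) = q}. A (b \<inter> X) S)"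
  proof (rule sum.reindex_bij_witness[where j="\<lambda>S. S \<inter> X" and i="\<lambda>S. S \<union> (b - X)"])
    fix a assume a: "a \<in> {a\<in>Pow (sites N). a - X = b - X \<and> card a = q}"
    show "(a \<inter> X) \<union> (b - X) = a" using a by blast
    have a1: "a \<subseteq> sites N" "a - X = b - X" "card a = q" using a by simp_all
    have "card a = card (a \<inter> X) + card (b - X)" by (rule carda[OF a1(1,2)])
    then show "a \<inter> X \<in> {S. S \<subseteq> X \<and> card S + card (b - X) = q}" using a1(3) by simp
    show "A (b\<inter>X) (a \<inter> X) = A (b\<inter>X) (a \<inter> X)" by simp
  next
    fix S assume S: "S \<in> {S. S \<subseteq> X \<and> card S + card (b - X) = q}"
    show "(S \<union> (b - X)) \<inter> X = S" using S by blast
    show "S \<union> (b - X) \<in> {a\<in>Pow (sites N). a - X = b - X \<and> card a = q}"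
    proof -
      have S1: "S \<subseteq> X" "card S + card (b - X) = q" using S by simp_all
      have "card (S \<union> (b - X)) = card S + card (b - X)" by (rule cardS[OF S1(1)])
      moreover have "S \<union> (b - X) \<subseteq> sites N" using S1(1) X b by blast
      moreover have "(S \<union> (b - X)) - X = b - X" using S1(1) by blast
      ultimately show ?thesis using S1(2) by simp
    qed
  qed
  finally show ?thesis by (simp add: c_def)
qed

lemma sep_aux: "(u::nat) + R \<le> v \<Longrightarrow> R \<le> nat \<bar>int (1 + u) - int (1 + v)\<bar> \<and> R \<le> nat \<bar>int (1 + v) - int (1 + u)\<bar>"
  by arith

lemma diam_bound:
  assumes "X \<in> regions N R" "i \<in> X" "j \<in> X"
  shows "nat \<bar>int i - int j\<bar> < R"
proof -
  have fin: "finite X" using assms(1) fin_sites finite_subset by (auto simp: regions_def)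
  have "nat \<bar>int i - int j\<bar> \<le> Max {nat \<bar>int i - int j\<bar> | i j. i \<in> X \<and> j \<in> X}"
    by (rule Max_ge) (use fin assms in \<open>auto intro: finite_image_set2\<close>)
  then show ?thesis using assms(1) by (auto simp: regions_def diam_def)
qed

theorem proposition2:
  fixes N R p :: nat and h :: "nat set \<Rightarrow> oper" and E :: complex
  assumes "R > 0"
    and "\<And>X. X \<in> regions N R \<Longrightarrow> supported_in N X (h X)"
    and "\<And>X. X \<in> regions N R \<Longrightarrow> state_eq N (app N (h X) (Wp N 1)) (\<lambda>_. 0)"
    and "\<And>X. X \<in> regions N R \<Longrightarrow> state_eq N (app N (h X) zero_state) (\<lambda>_. 0)"
    and "p \<le> N" and "real p \<le> real N / real R"
    and "state_eq N (app N (\<lambda>b a. \<Sum>X\<in>regions N R. h X b a) (Wp N p)) (\<lambda>b. E * Wp N p b)"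
  shows "E = 0"
proof -
  note R = assms(1)
  define b where "b = (\<lambda>k. 1 + k * R) ` {..<p}"
  have pR: "p * R \<le> N"
  proof -
    have "real p * real R \<le> real N" using assms(6) R by (simp add: field_simps)
    then show ?thesis by (metis of_nat_le_iff of_nat_mult)
  qed
  have inj: "inj_on (\<lambda>k. 1 + k * R) {..<p}" using R by (auto simp: inj_on_def)
  have cardb: "card b = p" unfolding b_def using inj by (simp add: card_image)
  have bsub: "b \<subseteq> sites N"
  proof
    fix x assume "x \<in> b"
    then obtain k where k: "k < p" "x = 1 + k * R" by (auto simp: b_def)
    have "Suc k * R \<le> p * R" using k(1) by (intro mult_le_mono1) simp
    then show "x \<in> sites N" using k pR R by (auto simp: sites_def)
  qed
  have sep: "R \<le> nat \<bar>int x - int y\<bar>" if xy: "x \<in> b" "y \<in> b" "x \<noteq> y" for x y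
  proof -
    obtain k where k: "x = 1 + k * R" using xy(1) unfolding b_def by blast
    obtain l where l: "y = 1 + l * R" using xy(2) unfolding b_def by blast
    have "k \<noteq> l" using k l xy by auto
    then have "k < l \<or> l < k" by arith
    then show ?thesis
    proof
      assume "k < l"
      then have "Suc k * R \<le> l * R" by (intro mult_le_mono1) simp
      then have "k * R + R \<le> l * R" by simp
      from sep_aux[OF this] show ?thesis using k l by simp
    next
      assume "l < k"
      then have "Suc l * R \<le> k * R" by (intro mult_le_mono1) simp
      then have "l * R + R \<le> k * R" by simp
      from sep_aux[OF this] show ?thesis using k l by simp
    qed
  qed
  have term0: "(\<Sum>a\<in>Pow (sites N). h X b a * Wp N p a) = 0" if XR: "X \<in> regions N R" for X
  proof -
    have Xs: "X \<subseteq> sites N" using XR by (auto simp: regions_def)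
    obtain A where A: "\<forall>a\<in>Pow (sites N). \<forall>b\<in>Pow (sites N). h X b a = (if b - X = a - X then A (b \<inter> X) (a \<inter> X) else 0)"
      using assms(2)[OF XR] by (auto simp: supported_in_def)
    define T where "T = b \<inter> X"
    have Ts: "T \<subseteq> sites N" using Xs by (auto simp: T_def)
    have finb: "finite b" using bsub fin_sites finite_subset by blast
    have finT: "finite T" using finb T_def by simp
    have cardT: "card T \<le> 1"
    proof -
      have "\<forall>x\<in>T. \<forall>y\<in>T. x = y"
      proof (intro ballI, rule ccontr)
        fix x y assume "x \<in> T" "y \<in> T" "x \<noteq> y"
        then have "R \<le> nat \<bar>int x - int y\<bar>" "nat \<bar>int x - int y\<bar> < R"
          using sep diam_bound[OF XR] by (auto simp: T_def)
        then show False by simp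
      qed
      then show ?thesis using finT card_le_Suc0_iff_eq by auto
    qed
    have cb: "card b = card (b - X) + card T"
    proof -
      have "b = (b - X) \<union> T" by (auto simp: T_def)
      then have "card b = card ((b - X) \<union> T)" by simp
      also have "\<dots> = card (b - X) + card T"
        by (rule card_Un_disjoint) (use finb finT in \<open>auto simp: T_def\<close>)
      finally show ?thesis .
    qed
    have main: "(\<Sum>a\<in>Pow (sites N). h X b a * Wp N p a) = complex_of_real (1/sqrt (real (N choose p))) * (\<Sum>S\<in>{S. S \<subseteq> X \<and> card S = card T}. A T S)"
    proof -
      have "{S. S \<subseteq> X \<and> card S + card (b - X) = p} = {S. S \<subseteq> X \<and> card S = card T}"
        using cardb cb by auto
      then show ?thesis using G[OF Xs bsub A, of p] T_def by simp
    qed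
    have z: "A T {} = 0"
    proof -
      have "app N (h X) zero_state T = 0" using assms(4)[OF XR] Ts by (auto simp: state_eq_def)
      moreover have "app N (h X) zero_state T = h X T {}"
      proof -
        have "app N (h X) zero_state T = (\<Sum>a\<in>Pow (sites N). if a = {} then h X T a else 0)"
          unfolding app_def zero_state_def by (rule sum.cong) auto
        also have "\<dots> = h X T {}" using fin_sites[of N] by (simp add: sum.delta')
        finally show ?thesis .
      qed
      moreover have "h X T {} = A T {}" using A Ts by (auto simp: T_def)
      ultimately show ?thesis by simp
    qed
    show ?thesis
    proof (cases "card T = 0")
      case True
      have finX: "finite X" using Xs fin_sites finite_subset by blast
      have "{S. S \<subseteq> X \<and> card S = card T} = {{}}"
      proof -
        have "(S \<subseteq> X \<and> card S = card T) \<longleftrightarrow> S = {}" for S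
        proof
          assume "S \<subseteq> X \<and> card S = card T"
          then show "S = {}" using True finX finite_subset by (metis card_0_eq)
        qed (use True in auto)
        then show ?thesis by auto
      qed
      then show ?thesis using main z by simp
    next
      case False
      then have c1: "card T = 1" using cardT by simp
      then obtain t where "t \<in> T" by (metis card_1_singletonE insertI1)
      then have N1: "N \<ge> 1" using Ts by (auto simp: sites_def)
      have "app N (h X) (Wp N 1) T = 0" using assms(3)[OF XR] Ts by (auto simp: state_eq_def)
      moreover have "app N (h X) (Wp N 1) T = complex_of_real (1/sqrt (real (N choose 1))) * (\<Sum>S\<in>{S. S \<subseteq> X \<and> card S = 1}. A T S)"
      proof -
        have "T - X = {}" "T \<inter> X = T" by (auto simp: T_def)
        then have "card (T - X) = 0" "T \<inter> X = T" by (metis card.empty, simp)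
        then show ?thesis unfolding app_def using G[OF Xs Ts A, of 1] by simp
      qed
      ultimately have "(\<Sum>S\<in>{S. S \<subseteq> X \<and> card S = 1}. A T S) = 0" using N1 by simp
      then show ?thesis using main c1 by simp
    qed
  qed
  have "app N (\<lambda>b a. \<Sum>X\<in>regions N R. h X b a) (Wp N p) b = 0"
    unfolding app_def
  proof -
    have "(\<Sum>a\<in>Pow (sites N). \<Sum>X\<in>regions N R. h X b a * Wp N p a) = (\<Sum>X\<in>regions N R. \<Sum>a\<in>Pow (sites N). h X b a * Wp N p a)"
      by (rule sum.swap)
    also have "\<dots> = 0" using term0 by simp
    finally show "(\<Sum>a\<in>Pow (sites N). (\<Sum>X\<in>regions N R. h X b a) * Wp N p a) = 0"
      by (simp add: sum_distrib_right)
  qed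
  moreover have "app N (\<lambda>b a. \<Sum>X\<in>regions N R. h X b a) (Wp N p) b = E * Wp N p b"
    using assms(7) bsub by (auto simp: state_eq_def)
  moreover have "Wp N p b \<noteq> 0" using bsub cardb assms(5) by (simp add: Wp_def)
  ultimately show ?thesis by simp
qed

end
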